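(* Let $\mathcal{D}$ be a non-atomic distribution on $[0,1]$ with mean $\mu\in(0,1)$, and let $\varepsilon\in(0,1/2)$ be a constant. For any $n$, there exists a weight vector $(w_1,\ldots,w_n)$ with $\frac{w_{\max}}{w_{\min}}\le\frac{2}{(1-\mu)^2\varepsilon^2}$ such that for any $m\le(1-\varepsilon)\frac{n}{1-\mu}$, with high probability (probability tending to $1$ as $n\to\infty$) no weighted proportional (WPROP) allocation exists when each utility $u_i(g)$ is drawn independently from $\mathcal{D}$.
   Context: Agents $N=[n]$ with positive weights $w_i$, $W=\sum_i w_i$; items $M=[m]$; additive utilities $u_i(S)=\sum_{g\in S}u_i(g)$, each $u_i(g)$ drawn independently from $\mathcal{D}$. An allocation $(A_1,\ldots,A_n)$ (partition of $M$) is WPROP if $u_i(A_i)\ge \frac{w_i}{W}u_i(M)$ for all $i$. $w_{\max},w_{\min}$ are the maximum and minimum weights. *)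

theory Defs
  imports "HOL-Probability.Probability"
begin

text \<open>Agents are 0..<n, items are 0..<m. A utility profile is a function
  u :: nat \<times> nat \<Rightarrow> real, with u (i,g) the utility of agent i for item g.
  An allocation (partition of the items among the agents) is a map A from
  items to agents, with A_i = {g < m. A g = i}.\<close>

definition is_allocation :: "nat \<Rightarrow> nat \<Rightarrow> (nat \<Rightarrow> nat) \<Rightarrow> bool" where
  "is_allocation n m A \<longleftrightarrow> (\<forall>g<m. A g < n)"

definition bundle_util :: "(nat \<times> nat \<Rightarrow> real) \<Rightarrow> nat \<Rightarrow> nat set \<Rightarrow> real" where
  "bundle_util u i S = (\<Sum>g\<in>S. u (i, g))"

definition WPROP :: "nat \<Rightarrow> nat \<Rightarrow> (nat \<Rightarrow> real) \<Rightarrow> (nat \<times> nat \<Rightarrow> real) \<Rightarrow> (nat \<Rightarrow> nat) \<Rightarrow> bool" where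
  "WPROP n m w u A \<longleftrightarrow> is_allocation n m A \<and>
     (\<forall>i<n. bundle_util u i {g. g < m \<and> A g = i}
              \<ge> w i / (\<Sum>j<n. w j) * bundle_util u i {..<m})"

definition WPROP_exists :: "nat \<Rightarrow> nat \<Rightarrow> (nat \<Rightarrow> real) \<Rightarrow> (nat \<times> nat \<Rightarrow> real) \<Rightarrow> bool" where
  "WPROP_exists n m w u \<longleftrightarrow> (\<exists>A. WPROP n m w u A)"

definition util_space :: "real measure \<Rightarrow> nat \<Rightarrow> nat \<Rightarrow> (nat \<times> nat \<Rightarrow> real) measure" where
  "util_space D n m = PiM ({..<n} \<times> {..<m}) (\<lambda>_. D)"

end

theory Submission
  imports Defs "HOL-Real_Asymp.Real_Asymp"
begin


lemma no_wprop:
  fixes u :: "nat \<times> nat \<Rightarrow> real" and R :: real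
  assumes kn: "k \<le> n" and m1: "1 \<le> m" and R: "R > 0"
    and pos: "\<And>i g. i < n \<Longrightarrow> g < m \<Longrightarrow> 0 < u (i,g) \<and> u (i,g) \<le> 1"
    and big: "R / (\<Sum>j<n. (if j < k then R else 1)) * (\<Sum>i<k. \<Sum>g<m. u (i,g)) > real m - real (n - k)"
  shows "\<not> WPROP_exists n m (\<lambda>i. if i < k then R else 1) u"
proof
  define w where "w = (\<lambda>i::nat. if i < k then R else (1::real))"
  define W where "W = (\<Sum>j<n. w j)"
  assume "WPROP_exists n m (\<lambda>i. if i < k then R else 1) u"
  then obtain A where A: "WPROP n m w u A" unfolding WPROP_exists_def w_def by blast
  have alloc: "\<And>g. g < m \<Longrightarrow> A g < n" using A unfolding WPROP_def is_allocation_def by blast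
  have wp: "\<And>i. i < n \<Longrightarrow> bundle_util u i {g. g < m \<and> A g = i} \<ge> w i / W * bundle_util u i {..<m}"
    using A unfolding WPROP_def W_def by blast
  have wpos: "\<And>j. w j > 0" using R by (simp add: w_def)
  have Wpos: "W > 0" if "n > 0" unfolding W_def using wpos that by (intro sum_pos) auto
  have upos: "bundle_util u i {..<m} > 0" if "i < n" for i
    unfolding bundle_util_def using pos[OF that] m1 by (intro sum_pos) (auto simp: lessThan_empty_iff)
  have nonempty: "\<exists>g<m. A g = i" if "k \<le> i" "i < n" for i
  proof (rule ccontr)
    assume "\<not> ?thesis"
    then have "{g. g < m \<and> A g = i} = {}" by auto
    then have "bundle_util u i {g. g < m \<and> A g = i} = 0" unfolding bundle_util_def by (metis sum.empty)
    moreover have "w i / W * bundle_util u i {..<m} > 0"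
      using wpos[of i] Wpos upos[of i] that by auto
    ultimately show False using wp[of i] that by linarith
  qed
  have surj: "{k..<n} \<subseteq> A ` {g. g < m \<and> k \<le> A g}"
    using nonempty by fastforce
  have c1: "n - k \<le> card {g. g < m \<and> k \<le> A g}"
    using surj_card_le[OF _ surj] by simp
  have c2: "card {g. g < m \<and> A g < k} + card {g. g < m \<and> k \<le> A g} = m"
  proof -
    have "card ({g. g < m \<and> A g < k} \<union> {g. g < m \<and> k \<le> A g}) = card {g. g < m \<and> A g < k} + card {g. g < m \<and> k \<le> A g}"
      by (intro card_Un_disjoint) auto
    moreover have "{g. g < m \<and> A g < k} \<union> {g. g < m \<and> k \<le> A g} = {..<m}" by auto
    ultimately show ?thesis by simp
  qed
  have ub: "(\<Sum>i<k. bundle_util u i {g. g < m \<and> A g = i}) \<le> real (card {g. g < m \<and> A g < k})"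
  proof -
    have "(\<Sum>i<k. bundle_util u i {g. g < m \<and> A g = i}) \<le> (\<Sum>i<k. real (card {g. g < m \<and> A g = i}))"
    proof (intro sum_mono)
      fix i assume "i \<in> {..<k}"
      then have "i < n" using kn by auto
      have "bundle_util u i {g. g < m \<and> A g = i} \<le> (\<Sum>g\<in>{g. g < m \<and> A g = i}. 1)"
        unfolding bundle_util_def using pos[OF \<open>i<n\<close>] by (intro sum_mono) auto
      then show "bundle_util u i {g. g < m \<and> A g = i} \<le> real (card {g. g < m \<and> A g = i})" by simp
    qed
    also have "(\<Sum>i<k. real (card {g. g < m \<and> A g = i})) = real (card {g. g < m \<and> A g < k})"
    proof -
      have "card (\<Union>i<k. {g. g < m \<and> A g = i}) = (\<Sum>i<k. card {g. g < m \<and> A g = i})"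
        by (intro card_UN_disjoint) auto
      moreover have "(\<Union>i<k. {g. g < m \<and> A g = i}) = {g. g < m \<and> A g < k}" by auto
      ultimately show ?thesis by (metis of_nat_sum)
    qed
    finally show ?thesis .
  qed
  have lb: "(\<Sum>i<k. bundle_util u i {g. g < m \<and> A g = i}) \<ge> R / W * (\<Sum>i<k. \<Sum>g<m. u (i,g))"
  proof -
    have "R / W * (\<Sum>i<k. \<Sum>g<m. u (i,g)) = (\<Sum>i<k. w i / W * bundle_util u i {..<m})"
      by (simp add: sum_distrib_left w_def bundle_util_def)
    also have "\<dots> \<le> (\<Sum>i<k. bundle_util u i {g. g < m \<and> A g = i})"
      using kn by (intro sum_mono wp) auto
    finally show ?thesis .
  qed
  have "R / W * (\<Sum>i<k. \<Sum>g<m. u (i,g)) > real m - real (n - k)"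
    using big unfolding W_def w_def by simp
  then show False using lb ub c1 c2 kn by linarith
qed



lemma arith_main:
  fixes R d mu x a c N K Mm :: real
  assumes R: "R \<ge> 1" and d: "0 \<le> d" "d < 1" and mu: "0 < mu" and x: "x > 0" and a: "a > 0"
    and c: "c > 0" and cdef: "c = R*(1-d)*mu*x*a - (x-1+a)*(a*(R-1)+1)"
    and N: "N \<ge> R*(1-d)*mu*x / c" and K: "a*N - 1 \<le> K" "K \<le> a*N" "0 \<le> K" "K \<le> N"
    and Mm: "0 \<le> Mm" "Mm \<le> x*N"
  shows "R*(1-d)*mu*K*Mm \<ge> (Mm - N + K)*(K*R + N - K)"
proof -
  define W where "W = K*R + N - K"
  have "K*R \<ge> K*1" using R K by (intro mult_left_mono) auto
  then have W0: "W \<ge> 0" unfolding W_def using K by simp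
  define b where "b = R*(1-d)*mu*K - W"
  have f: "R*(1-d)*mu*K*Mm - (Mm - N + K)*W = Mm*b + (N-K)*W"
    unfolding b_def by (simp add: algebra_simps)
  have Npos: "N \<ge> 0" using K by linarith
  have fx: "x*N*b + (N-K)*W \<ge> 0"
  proof (cases "x*N - N + K \<le> 0")
    case True
    have "R*(1-d)*mu*K*(x*N) \<ge> 0" using R d mu x K Npos by simp
    moreover have "(x*N - N + K)*W \<le> 0" using True W0 by (simp add: mult_nonpos_nonneg)
    moreover have "x*N*b + (N-K)*W = R*(1-d)*mu*K*(x*N) - (x*N - N + K)*W"
      unfolding b_def by (simp add: algebra_simps)
    ultimately show ?thesis by linarith
  next
    case False
    have "K*(R-1) \<le> a*N*(R-1)" using K R by (intro mult_right_mono) auto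
    then have W1: "W \<le> a*N*(R-1) + N" unfolding W_def by (simp add: algebra_simps)
    have e1: "(x*N - N + K)*W \<le> (x*N - N + a*N)*(a*N*(R-1) + N)"
      using False W1 W0 K by (intro mult_mono) auto
    have e2: "R*(1-d)*mu*(a*N - 1)*(x*N) \<le> R*(1-d)*mu*K*(x*N)"
    proof -
      have "0 \<le> R*(1-d)*mu" using R d mu by simp
      moreover have "0 \<le> x*N" using x Npos by simp
      ultimately show ?thesis using K(1) by (simp add: mult_left_mono mult_right_mono)
    qed
    have e3: "R*(1-d)*mu*(a*N - 1)*(x*N) - (x*N - N + a*N)*(a*N*(R-1) + N) = N*(N*c - R*(1-d)*mu*x)"
      unfolding cdef by (simp add: algebra_simps)
    have "N*c \<ge> R*(1-d)*mu*x" using N c by (simp add: field_simps)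
    then have e4: "N*(N*c - R*(1-d)*mu*x) \<ge> 0" using Npos by simp
    have "x*N*b + (N-K)*W = R*(1-d)*mu*K*(x*N) - (x*N - N + K)*W"
      unfolding b_def by (simp add: algebra_simps)
    then show ?thesis using e1 e2 e3 e4 by linarith
  qed
  have "Mm*b + (N-K)*W \<ge> 0"
  proof (cases "b \<ge> 0")
    case True then show ?thesis using Mm W0 K by simp
  next
    case False
    then have "Mm*b \<ge> x*N*b" using Mm by (simp add: mult_right_mono_neg)
    then show ?thesis using fx by linarith
  qed
  then show ?thesis using f unfolding W_def by linarith
qed

lemma c_pos:
  fixes mu e :: real
  assumes h: "0 < mu" "mu < 1" "0 < e" "e < 1/2"
  defines "p \<equiv> 1 - mu"
  defines "R \<equiv> 2 / (p^2 * e^2)" and "d \<equiv> e*p/8" and "a \<equiv> e/2" and "x \<equiv> (1-e)/p"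
  shows "R*(1-d)*mu*x*a - (x-1+a)*(a*(R-1)+1) > 0"
proof -
  have p: "0 < p" "p < 1" using h by (auto simp: p_def)
  define T where "T = 1/(p^2*e)"
  have aR: "a*R = T" unfolding a_def R_def T_def using p(1) h(3) by (simp add: field_simps power2_eq_square)
  have T0: "T > 0" unfolding T_def using p h by simp
  have eq: "p*(R*(1-d)*mu*x*a - (x-1+a)*(a*(R-1)+1)) =
     T*((1-d)*mu*(1-e) - (mu-e+a*p)) - (mu-e+a*p)*(1-a)"
  proof -
    have "p*x = 1-e" unfolding x_def using p by simp
    have "p*(x-1+a) = p*x - p + a*p" by (simp add: algebra_simps)
    then have "p*(x-1+a) = mu-e+a*p" using \<open>p*x = 1-e\<close> unfolding p_def by simp
    have "p*(R*(1-d)*mu*x*a - (x-1+a)*(a*(R-1)+1)) = (a*R)*(1-d)*mu*(p*x) - (p*(x-1+a))*(a*R - a + 1)"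
      by (simp add: algebra_simps)
    also have "\<dots> = T*(1-d)*mu*(1-e) - (mu-e+a*p)*(T - a + 1)"
      using \<open>p*x = 1-e\<close> \<open>p*(x-1+a) = mu-e+a*p\<close> aR by simp
    finally show ?thesis by (simp add: algebra_simps)
  qed
  have i1: "(1-d)*mu*(1-e) - (mu-e+a*p) \<ge> 3*e*p/8"
  proof -
    have "(1-d)*mu*(1-e) - (mu-e+a*p) = e*p/2 - d*mu*(1-e)"
      unfolding a_def p_def by (simp add: algebra_simps)
    moreover have "d*mu*(1-e) \<le> d" unfolding d_def using h p
      by (simp add: mult_le_one)
    ultimately show ?thesis unfolding d_def by simp
  qed
  have i2: "T*((1-d)*mu*(1-e) - (mu-e+a*p)) \<ge> T*(3*e*p/8)"
    using i1 T0 by (simp add: mult_left_mono)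
  have i3: "T*(3*e*p/8) = 3/(8*p)" unfolding T_def using p(1) h(3) by (simp add: field_simps power2_eq_square)
  have i4: "(mu-e+a*p)*(1-a) \<le> mu"
  proof (cases "mu-e+a*p \<ge> 0")
    case True
    have "(mu-e+a*p)*(1-a) \<le> (mu-e+a*p)*1" using True h by (intro mult_left_mono) (auto simp: a_def)
    also have "\<dots> \<le> mu" using p h by (simp add: a_def mult_le_one)
    finally show ?thesis .
  next
    case False
    then have "(mu-e+a*p)*(1-a) \<le> 0" using h by (intro mult_nonpos_nonneg) (auto simp: a_def)
    then show ?thesis using h by simp
  qed
  have i5: "3/(8*p) > mu"
  proof -
    have sq: "0 \<le> (2*p-1)*(2*p-1)" by simp
    have "8*p*mu = 8*p - 8*p*p" unfolding p_def by (simp add: algebra_simps)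
    then have "8*p*mu < 3" using sq by (simp add: algebra_simps)
    then show ?thesis using p by (simp add: field_simps)
  qed
  have "p*(R*(1-d)*mu*x*a - (x-1+a)*(a*(R-1)+1)) > 0" using eq i2 i3 i4 i5 by linarith
  then show ?thesis using p by (simp add: zero_less_mult_iff)
qed



lemma WPROP_restrict: "WPROP n m w u A = WPROP n m w u (restrict A {..<m})"
proof -
  have "\<And>i. {g. g < m \<and> restrict A {..<m} g = i} = {g. g < m \<and> A g = i}" by auto
  then show ?thesis unfolding WPROP_def is_allocation_def by simp
qed

lemma WPROP_exists_fin: "WPROP_exists n m w u \<longleftrightarrow> (\<exists>A\<in>{..<m} \<rightarrow>\<^sub>E {..<n}. WPROP n m w u A)"
proof
  assume "WPROP_exists n m w u"
  then obtain A where A: "WPROP n m w u A" unfolding WPROP_exists_def by blast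
  then have "restrict A {..<m} \<in> {..<m} \<rightarrow>\<^sub>E {..<n}"
    unfolding WPROP_def is_allocation_def by auto
  moreover have "WPROP n m w u (restrict A {..<m})" using A WPROP_restrict by metis
  ultimately show "\<exists>A\<in>{..<m} \<rightarrow>\<^sub>E {..<n}. WPROP n m w u A" by blast
qed (auto simp: WPROP_exists_def)

lemma comp_meas:
  assumes "sets D = sets borel" "i < n" "g < m"
  shows "(\<lambda>u. u (i,g)) \<in> borel_measurable (util_space D n m)"
proof -
  have "(\<lambda>u. u (i,g)) \<in> measurable (util_space D n m) D"
    unfolding util_space_def using assms by (intro measurable_component_singleton) auto
  then show ?thesis using measurable_cong_sets[OF refl assms(1), of "util_space D n m"] by blast
qed

lemma sets_WPROP:
  assumes D: "sets D = sets borel"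
  shows "{u \<in> space (util_space D n m). \<not> WPROP_exists n m w u} \<in> sets (util_space D n m)"
proof -
  let ?M = "util_space D n m"
  have bu: "(\<lambda>u. bundle_util u i S) \<in> borel_measurable ?M" if "i<n" "S \<subseteq> {..<m}" for i S
    unfolding bundle_util_def using that comp_meas[OF D] by (intro borel_measurable_sum) auto
  have one: "{u \<in> space ?M. WPROP n m w u A} \<in> sets ?M" for A
  proof (cases "is_allocation n m A")
    case False then show ?thesis by (simp add: WPROP_def)
  next
    case True
    define F where "F = (\<lambda>i u. bundle_util u i {g. g<m \<and> A g = i} - w i / (\<Sum>j<n. w j) * bundle_util u i {..<m})"
    have "{u \<in> space ?M. WPROP n m w u A} = {u\<in>space ?M. \<forall>i\<in>{..<n}. 0 \<le> F i u}"
      using True by (auto simp: WPROP_def F_def)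
    also have "\<dots> \<in> sets ?M"
    proof (intro sets.sets_Collect_finite_All)
      fix i assume "i \<in> {..<n}"
      then have [measurable]: "F i \<in> borel_measurable ?M" unfolding F_def
        using bu[of i "{g. g<m \<and> A g = i}"] bu[of i "{..<m}"] by (intro borel_measurable_diff borel_measurable_times) auto
      show "{u \<in> space ?M. 0 \<le> F i u} \<in> sets ?M" by measurable
    qed auto
    finally show ?thesis .
  qed
  have "{u \<in> space ?M. \<exists>A\<in>{..<m} \<rightarrow>\<^sub>E {..<n}. WPROP n m w u A} \<in> sets ?M"
    using one by (intro sets.sets_Collect_finite_Ex) (auto simp: finite_PiE)
  then have "space ?M - {u \<in> space ?M. \<exists>A\<in>{..<m} \<rightarrow>\<^sub>E {..<n}. WPROP n m w u A} \<in> sets ?M" by auto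
  moreover have "space ?M - {u \<in> space ?M. \<exists>A\<in>{..<m} \<rightarrow>\<^sub>E {..<n}. WPROP n m w u A} = {u \<in> space ?M. \<not> WPROP_exists n m w u}"
    using WPROP_exists_fin by blast
  ultimately show ?thesis by simp
qed



lemma prob_core:
  fixes D :: "real measure" and mu R t :: real
  assumes PD: "prob_space D" and SD: "sets D = sets borel"
    and AED: "AE x in D. 0 < x \<and> x \<le> 1"
    and mu: "mu = (\<integral>x. x \<partial>D)"
    and k1: "1 \<le> k" and kn: "k \<le> n" and m1: "1 \<le> m" and R: "R > 0" and t: "t \<ge> 0"
    and cond: "R / (\<Sum>j<n. (if j < k then R else 1)) * (real k * real m * mu - t) \<ge> real m - real (n - k)"
  shows "measure (util_space D n m) {u \<in> space (util_space D n m). \<not> WPROP_exists n m (\<lambda>i. if i<k then R else 1) u}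
           \<ge> 1 - exp (-2 * t^2 / (real k * real m))"
proof -
  define I where "I = {..<n} \<times> {..<m}"
  define H where "H = {..<k} \<times> {..<m}"
  define M where "M = util_space D n m"
  define S where "S = {u \<in> space M. \<not> WPROP_exists n m (\<lambda>i. if i<k then R else 1) u}"
  have MI: "M = PiM I (\<lambda>_. D)" unfolding M_def util_space_def I_def ..
  interpret P: prob_space M unfolding MI by (intro prob_space_PiM PD)
  have HI: "H \<subseteq> I" using kn by (auto simp: H_def I_def)
  have finI: "finite I" "finite H" by (auto simp: I_def H_def)
  have Ine: "I \<noteq> {}" using k1 kn m1 by (auto simp: I_def lessThan_empty_iff)
  have rv: "(\<lambda>u. u j) \<in> borel_measurable M" if "j \<in> I" for j
    using comp_meas[OF SD, of "fst j" n "snd j" m] that by (auto simp: M_def I_def)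
  have rvD: "(\<lambda>u. u j) \<in> measurable M D" if "j \<in> I" for j
    using rv[OF that] measurable_cong_sets[OF refl SD, of M] by blast
  have distrD: "distr M D (\<lambda>u. u j) = D" if "j \<in> I" for j
    unfolding MI using that PD by (intro distr_PiM_component) auto
  have indepD: "P.indep_vars (\<lambda>_. D) (\<lambda>j u. u j) I"
  proof (subst P.indep_vars_iff_distr_eq_PiM'[OF Ine rvD])
    have "distr M (PiM I (\<lambda>_. D)) (\<lambda>x. \<lambda>j\<in>I. x j) = distr M M (\<lambda>x. x)"
      unfolding MI by (intro distr_cong) (auto simp: space_PiM PiE_def extensional_restrict)
    also have "\<dots> = PiM I (\<lambda>_. D)" unfolding MI by simp
    also have "\<dots> = PiM I (\<lambda>j. distr M D (\<lambda>u. u j))"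
      using distrD by (intro PiM_cong) auto
    finally show "distr M (PiM I (\<lambda>_. D)) (\<lambda>x. \<lambda>j\<in>I. x j) = PiM I (\<lambda>j. distr M D (\<lambda>u. u j))" .
  qed auto
  have indep: "P.indep_vars (\<lambda>_. borel) (\<lambda>j u. u j) H"
  proof -
    have "P.indep_vars (\<lambda>_. borel) (\<lambda>j u. u j) I"
      using indepD unfolding P.indep_vars_def using SD measurable_cong_sets[OF refl SD, of M] by simp
    then show ?thesis using HI by (rule P.indep_vars_subset)
  qed
  have AEI: "AE u in M. \<forall>j\<in>I. 0 < u j \<and> u j \<le> 1"
    unfolding MI using finI(1) PD AED
    by (intro eventually_ball_finite ballI AE_PiM_component) auto
  have expect: "P.expectation (\<lambda>u. u j) = mu" if "j \<in> I" for j
  proof -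
    have "(\<lambda>x. x) \<in> borel_measurable D" using measurable_ident_sets[OF SD] .
    then have "integral\<^sup>L (distr M D (\<lambda>u. u j)) (\<lambda>x. x) = P.expectation (\<lambda>u. u j)"
      using rvD[OF that] by (intro integral_distr) auto
    then show ?thesis using distrD[OF that] mu by simp
  qed
  have cardH: "real (card H) = real k * real m" by (simp add: H_def)
  interpret Hh: Hoeffding_ineq M H "\<lambda>j u. u j" "\<lambda>_. 0" "\<lambda>_. 1" "real k * real m * mu"
  proof unfold_locales
    show "finite H" by fact
    show "P.indep_vars (\<lambda>_. borel) (\<lambda>j u. u j) H" by fact
    show "AE x in M. x i \<in> {0..1}" if "i \<in> H" for i
      using AEI by eventually_elim (use that HI in force)
    have "(\<Sum>i\<in>H. P.expectation (\<lambda>u. u i)) = (\<Sum>i\<in>H. mu)" using expect HI by (intro sum.cong) auto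
    then show "real k * real m * mu \<equiv> (\<Sum>i\<in>H. P.expectation (\<lambda>u. u i))" using cardH by simp
  qed
  define B where "B = {x \<in> space M. (\<Sum>i\<in>H. x i) \<le> real k * real m * mu - t}"
  have "(\<Sum>i\<in>H. (1 - 0)\<^sup>2) > (0::real)" using cardH k1 m1 by simp
  from Hh.Hoeffding_ineq_le[OF t this]
  have hb: "P.prob B \<le> exp (-2 * t^2 / (real k * real m))" unfolding B_def using cardH by simp
  have [measurable]: "(\<lambda>x. \<Sum>i\<in>H. x i) \<in> borel_measurable M" using rv HI by (intro borel_measurable_sum) auto
  have Bm: "B \<in> P.events" unfolding B_def by measurable
  have Sm: "S \<in> P.events" unfolding S_def M_def using sets_WPROP[OF SD] .
  have Wpos: "(\<Sum>j<n. (if j < k then R else 1)) > 0" using R k1 kn by (intro sum_pos) (auto simp: lessThan_empty_iff)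
  have mono: "AE u in M. u \<in> space M - B \<longrightarrow> u \<in> S"
    using AEI
  proof eventually_elim
    case (elim u)
    show ?case
    proof
      assume u: "u \<in> space M - B"
      then have sum: "(\<Sum>i\<in>H. u i) > real k * real m * mu - t" unfolding B_def by auto
      have eqs: "(\<Sum>i\<in>H. u i) = (\<Sum>i<k. \<Sum>g<m. u (i,g))"
        unfolding H_def by (simp add: sum.cartesian_product)
      have "R / (\<Sum>j<n. (if j < k then R else 1)) * (\<Sum>i<k. \<Sum>g<m. u (i,g))
         > R / (\<Sum>j<n. (if j < k then R else 1)) * (real k * real m * mu - t)"
        using sum eqs Wpos R by (intro mult_strict_left_mono) auto
      then have "\<not> WPROP_exists n m (\<lambda>i. if i<k then R else 1) u"
        using cond elim kn m1 R by (intro no_wprop) (auto simp: I_def)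
      then show "u \<in> S" using u unfolding S_def by auto
    qed
  qed
  have "P.prob (space M - B) \<le> P.prob S" by (rule P.finite_measure_mono_AE[OF mono Sm])
  moreover have "P.prob (space M - B) = 1 - P.prob B" using P.prob_compl[OF Bm] .
  ultimately show ?thesis using hb unfolding S_def M_def by linarith
qed


lemma lim1: fixes C a :: real assumes "C > 0" "a > 0"
  shows "(\<lambda>n. 1 - exp (-C*(a*real n - 1))) \<longlonglongrightarrow> 1"
  using assms by real_asymp


lemma sum_weights: "k \<le> n \<Longrightarrow> (\<Sum>j<n. (if j < k then R else 1)) = real k * R + (real n - real k)"
proof (induction n rule: dec_induct)
  case base
  then show ?case by simp
next
  case (step n)
  then show ?case by simp
qed

theorem theorem2:
  fixes D :: "real measure" and \<mu> \<epsilon> :: real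
  assumes "prob_space D"
    and "sets D = sets borel"
    and "measure D {0..1} = 1"
    and "\<And>x. measure D {x} = 0"
    and "\<mu> = (\<integral>x. x \<partial>D)"
    and "0 < \<mu>" and "\<mu> < 1"
    and "0 < \<epsilon>" and "\<epsilon> < 1/2"
  shows "\<exists>w :: nat \<Rightarrow> nat \<Rightarrow> real.
           (\<forall>n. (\<forall>i<n. 0 < w n i) \<and>
                (\<forall>i<n. \<forall>j<n. w n i / w n j \<le> 2 / ((1 - \<mu>)^2 * \<epsilon>^2))) \<and>
           (\<forall>m :: nat \<Rightarrow> nat.
              (\<forall>\<^sub>F n in sequentially. 1 \<le> m n \<and> real (m n) \<le> (1 - \<epsilon>) * real n / (1 - \<mu>)) \<longrightarrow>
              ((\<lambda>n. measure (util_space D n (m n))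
                      {u \<in> space (util_space D n (m n)). \<not> WPROP_exists n (m n) (w n) u})
                 \<longlonglongrightarrow> 1))"
proof -
  note PD = assms(1) and SD = assms(2) and mu_def = assms(5) and h = assms(6-9)
  define p where "p = 1 - \<mu>"
  define R where "R = 2 / (p^2 * \<epsilon>^2)"
  define d where "d = \<epsilon>*p/8"
  define a where "a = \<epsilon>/2"
  define x where "x = (1-\<epsilon>)/p"
  define c where "c = R*(1-d)*\<mu>*x*a - (x-1+a)*(a*(R-1)+1)"
  define k where "k = (\<lambda>n::nat. nat \<lfloor>a * real n\<rfloor>)"
  define w where "w = (\<lambda>n i. if i < k n then R else (1::real))"
  have p: "0 < p" "p < 1" using h by (auto simp: p_def)
  have c: "c > 0" unfolding c_def R_def d_def a_def x_def p_def using c_pos[OF h] by simp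
  have "p^2 * \<epsilon>^2 \<le> 1 * 1" using p h by (intro mult_mono power_le_one) auto
  then have R1: "R \<ge> 1" unfolding R_def using p h by (simp add: field_simps)
  have R': "R = 2 / ((1 - \<mu>)^2 * \<epsilon>^2)" unfolding R_def p_def ..
  have part1: "\<forall>n. (\<forall>i<n. 0 < w n i) \<and> (\<forall>i<n. \<forall>j<n. w n i / w n j \<le> 2 / ((1 - \<mu>)^2 * \<epsilon>^2))"
  proof (intro allI conjI impI)
    fix n i :: nat assume "i < n" then show "0 < w n i" using R1 by (simp add: w_def)
  next
    fix n i j :: nat assume "i < n" "j < n"
    have "1 / R \<le> 1" using R1 by simp
    then have "1 / R \<le> R" using R1 by linarith
    moreover have "R / R \<le> R" "R / 1 \<le> R" "1 / 1 \<le> R" using R1 by auto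
    ultimately have "R / R \<le> R" "R / 1 \<le> R" "1 / R \<le> R" "1 / 1 \<le> R" by auto
    then show "w n i / w n j \<le> 2 / ((1 - \<mu>)^2 * \<epsilon>^2)" unfolding R'[symmetric] w_def by auto
  qed
  have part2: "(\<lambda>n. measure (util_space D n (m n))
                      {u \<in> space (util_space D n (m n)). \<not> WPROP_exists n (m n) (w n) u}) \<longlonglongrightarrow> 1"
    if mev: "\<forall>\<^sub>F n in sequentially. 1 \<le> m n \<and> real (m n) \<le> (1 - \<epsilon>) * real n / (1 - \<mu>)" for m :: "nat \<Rightarrow> nat"
  proof -
    define C where "C = 2 * (d*\<mu>)^2"
    have C: "C > 0" unfolding C_def d_def using p h by simp
    have a: "a > 0" "a < 1" using h by (auto simp: a_def)
    have x: "x > 0" unfolding x_def using p h by simp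
    have "\<epsilon>*p < 1*1" using p h by (intro mult_strict_mono) auto
    then have d: "0 \<le> d" "d < 1" unfolding d_def using p h by (auto simp: field_simps)
    have AED: "AE y in D. 0 < y \<and> y \<le> 1"
    proof -
      interpret PDi: prob_space D by (rule PD)
      have "{0..1::real} = {0<..1} \<union> {0}" by auto
      then have "measure D {0<..1} + measure D {0} = 1"
        using assms(3) SD PDi.finite_measure_Union[of "{0<..1}" "{0}"] by auto
      then have "measure D {0<..1::real} = 1" using assms(4) by simp
      from PDi.AE_prob_1[OF this] show ?thesis by (auto elim!: AE_mp)
    qed
    have ev1: "\<forall>\<^sub>F n in sequentially. real n \<ge> max (R*(1-d)*\<mu>*x / c) (1/a)"
      by (rule eventually_sequentiallyI[of "nat \<lceil>max (R*(1-d)*\<mu>*x / c) (1/a)\<rceil>"]) linarith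
    have lower: "\<forall>\<^sub>F n in sequentially. 1 - exp (-C*(a*real n - 1)) \<le> measure (util_space D n (m n))
                      {u \<in> space (util_space D n (m n)). \<not> WPROP_exists n (m n) (w n) u}"
      using ev1 mev
    proof eventually_elim
      case (elim n)
      define N where "N = real n"
      define K where "K = real (k n)"
      define Mm where "Mm = real (m n)"
      have N1: "N \<ge> R*(1-d)*\<mu>*x / c" "N \<ge> 1/a" using elim(1) unfolding N_def by auto
      have aN: "a*N \<ge> 1" using N1(2) a by (simp add: field_simps)
      have Kle: "K \<le> a*N" unfolding K_def k_def N_def using aN N_def by simp
      have Kge: "a*N - 1 \<le> K" unfolding K_def k_def N_def using aN N_def by linarith
      have "1 \<le> \<lfloor>a * real n\<rfloor>" using aN unfolding N_def by (simp add: le_floor_iff)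
      then have k1: "1 \<le> k n" unfolding k_def by linarith
      have "a*N \<le> N" using a unfolding N_def by (intro mult_left_le_one_le) auto
      then have kn: "k n \<le> n" using Kle unfolding K_def N_def by linarith
      have m1: "1 \<le> m n" and Mmx: "Mm \<le> x*N"
        using elim(2) unfolding Mm_def N_def x_def p_def by (auto simp: field_simps)
      have main: "R*(1-d)*\<mu>*K*Mm \<ge> (Mm - N + K)*(K*R + N - K)"
        by (rule arith_main[OF R1 d h(1) x a(1) c c_def N1(1) Kge Kle]) (use kn m1 Mmx in \<open>auto simp: K_def N_def Mm_def\<close>)
      define W where "W = K*R + (N - K)"
      have W: "(\<Sum>j<n. (if j < k n then R else 1)) = W" unfolding W_def K_def N_def using sum_weights[OF kn] .
      have Wpos: "W > 0" unfolding W_def using R1 Kle k1 kn unfolding K_def N_def by (smt (verit) of_nat_le_iff mult_le_cancel_right1 of_nat_1)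
      define t where "t = d*\<mu>*K*Mm"
      have t: "t \<ge> 0" unfolding t_def K_def Mm_def using d h by simp
      have cond: "R / (\<Sum>j<n. (if j < k n then R else 1)) * (real (k n) * real (m n) * \<mu> - t) \<ge> real (m n) - real (n - k n)"
      proof -
        have "real (m n) - real (n - k n) = Mm - N + K" using kn unfolding Mm_def N_def K_def by (simp add: of_nat_diff)
        moreover have "R / W * (K * Mm * \<mu> - t) = R*(1-d)*\<mu>*K*Mm / W" unfolding t_def by (simp add: algebra_simps add_divide_distrib[symmetric])
        moreover have "(Mm - N + K) \<le> R*(1-d)*\<mu>*K*Mm / W" using main Wpos unfolding W_def by (simp add: field_simps)
        moreover have "R / (\<Sum>j<n. (if j < k n then R else 1)) * (real (k n) * real (m n) * \<mu> - t) = R / W * (K * Mm * \<mu> - t)"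
          using W by (simp add: K_def Mm_def)
        ultimately show ?thesis by linarith
      qed
      have pc: "measure (util_space D n (m n)) {u \<in> space (util_space D n (m n)). \<not> WPROP_exists n (m n) (\<lambda>i. if i < k n then R else 1) u}
           \<ge> 1 - exp (-2 * t^2 / (real (k n) * real (m n)))"
        using R1 by (intro prob_core[OF PD SD AED mu_def k1 kn m1 _ t cond]) auto
      have "-2 * t^2 / (real (k n) * real (m n)) = -C * K * Mm" unfolding t_def C_def K_def Mm_def
        using k1 m1 by (simp add: field_simps power2_eq_square)
      also have "\<dots> \<le> -C * (a*N - 1)"
      proof -
        have "C * (a*N - 1) \<le> C * K" using C Kge by simp
        also have "\<dots> \<le> C * K * Mm"
        proof -
          have "K*1 \<le> K*Mm" using m1 unfolding Mm_def K_def by (intro mult_left_mono) auto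
          then have "C*(K*1) \<le> C*(K*Mm)" using mult_left_mono[of "K*1" "K*Mm" C] C by linarith
          then show ?thesis by (simp add: mult.assoc)
        qed
        finally show ?thesis by simp
      qed
      finally have "exp (-2 * t^2 / (real (k n) * real (m n))) \<le> exp (-C * (a*N - 1))" by simp
      then show ?case using pc unfolding w_def N_def by linarith
    qed
    have upper: "\<forall>\<^sub>F n in sequentially. measure (util_space D n (m n))
                      {u \<in> space (util_space D n (m n)). \<not> WPROP_exists n (m n) (w n) u} \<le> 1"
    proof (intro always_eventually allI)
      fix n
      interpret Q: prob_space "util_space D n (m n)" unfolding util_space_def by (intro prob_space_PiM PD)
      show "Q.prob {u \<in> space (util_space D n (m n)). \<not> WPROP_exists n (m n) (w n) u} \<le> 1" by simp
    qed
    have "(\<lambda>n. 1 - exp (-C*(a*real n - 1))) \<longlonglongrightarrow> 1" by (rule lim1[OF C a(1)])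
    from tendsto_sandwich[OF lower upper this tendsto_const] show ?thesis .
  qed
  show ?thesis using part1 part2 by blast
qed

end
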